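(* Let $\nu=w\mu$ with $w$ a probability density w.r.t. $\mu$, and let $(x_1,\dots,x_n)\sim\nu^{\otimes n}$. Let $0<\delta<1$, $S_\delta=\{\lambda_{\min}(\mathbf G^w)\ge1-\delta\}$, and assume $\mathbb P(S_\delta)>0$ and $K_{w,m}:=\sup_{x\in\mathcal X}w(x)^{-1}\|\boldsymbol\varphi(x)\|_2^2<\infty$. Then for every $f\in L^2_\mu$, $$\mathbb E(\|\hat P_{V_m}f\|^2\mid S_\delta)\le\mathbb P(S_\delta)^{-1}(1-\delta)^{-1}\|f\|^2,$$ and $$\mathbb E(\|\hat P_{V_m}f\|^2\mid S_\delta)\le\mathbb P(S_\delta)^{-1}(1-\delta)^{-2}\Big(\|P_{V_m}f\|^2+\frac{K_{w,m}}{n}\|f\|^2\Big).$$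
   Context: $\mathcal X$ is a Polish space with Borel probability measure $\mu$; $\|\cdot\|$ is the $L^2_\mu(\mathcal X)$ norm. $V_m\subset L^2_\mu$ is an $m$-dimensional subspace with $L^2_\mu$-orthonormal basis $\varphi_1,\dots,\varphi_m$, $\boldsymbol\varphi(x)=(\varphi_1(x),\dots,\varphi_m(x))^T$, $P_{V_m}$ the $L^2_\mu$-orthogonal projection onto $V_m$. With weight $w$ and points $x_i$: $\|f\|_n^2=\frac1n\sum_iw(x_i)^{-1}f(x_i)^2$, $\mathbf G^w=\frac1n\sum_iw(x_i)^{-1}\boldsymbol\varphi(x_i)\boldsymbol\varphi(x_i)^T$, and $\hat P_{V_m}f$ (defined when $\mathbf G^w$ is invertible) is the unique minimizer over $g\in V_m$ of $\|f-g\|_n$. *)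

theory Defs
  imports "HOL-Probability.Probability"
begin

text \<open>Basis functions are indexed by a finite type 'm (so m = CARD('m)).
  Sample vectors are functions nat => 'a, the i-th sample point being x i, i < n.\<close>

definition L2norm_sq :: "'a measure \<Rightarrow> ('a \<Rightarrow> real) \<Rightarrow> real" where
  "L2norm_sq \<mu> g = (\<integral>y. (g y)\<^sup>2 \<partial>\<mu>)"

definition Vfun :: "('m::finite \<Rightarrow> 'a \<Rightarrow> real) \<Rightarrow> real^'m \<Rightarrow> 'a \<Rightarrow> real" where
  "Vfun \<phi> c = (\<lambda>y. \<Sum>j\<in>UNIV. c $ j * \<phi> j y)"

definition Pproj :: "'a measure \<Rightarrow> ('m::finite \<Rightarrow> 'a \<Rightarrow> real) \<Rightarrow> ('a \<Rightarrow> real) \<Rightarrow> 'a \<Rightarrow> real" where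
  "Pproj \<mu> \<phi> f = Vfun \<phi> (\<chi> j. \<integral>y. f y * \<phi> j y \<partial>\<mu>)"

definition emp_norm_sq :: "nat \<Rightarrow> ('a \<Rightarrow> real) \<Rightarrow> (nat \<Rightarrow> 'a) \<Rightarrow> ('a \<Rightarrow> real) \<Rightarrow> real" where
  "emp_norm_sq n w x g = (1 / real n) * (\<Sum>i<n. inverse (w (x i)) * (g (x i))\<^sup>2)"

definition Gw :: "nat \<Rightarrow> ('a \<Rightarrow> real) \<Rightarrow> ('m::finite \<Rightarrow> 'a \<Rightarrow> real) \<Rightarrow> (nat \<Rightarrow> 'a) \<Rightarrow> real^'m^'m" where
  "Gw n w \<phi> x = (\<chi> j k. (1 / real n) * (\<Sum>i<n. inverse (w (x i)) * \<phi> j (x i) * \<phi> k (x i)))"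

definition lambda_min :: "real^'m::finite^'m \<Rightarrow> real" where
  "lambda_min G = Inf {l. \<exists>v. v \<noteq> 0 \<and> G *v v = l *\<^sub>R v}"

text \<open>Weighted least-squares projection: the unique minimizer over V_m of ||f - g||_n
  (meaningful when G^w is invertible, where the minimizer is unique).\<close>
definition hatP :: "nat \<Rightarrow> ('a \<Rightarrow> real) \<Rightarrow> ('m::finite \<Rightarrow> 'a \<Rightarrow> real) \<Rightarrow> (nat \<Rightarrow> 'a)
    \<Rightarrow> ('a \<Rightarrow> real) \<Rightarrow> 'a \<Rightarrow> real" where
  "hatP n w \<phi> x f = Vfun \<phi> (THE c. \<forall>d. emp_norm_sq n w x (\<lambda>y. f y - Vfun \<phi> c y)
                                      \<le> emp_norm_sq n w x (\<lambda>y. f y - Vfun \<phi> d y))"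

text \<open>K_{w,m} = sup_x w(x)^{-1} ||phi(x)||_2^2, in ennreal (a/0 = top for a > 0).\<close>
definition Kwm :: "('a \<Rightarrow> real) \<Rightarrow> ('m::finite \<Rightarrow> 'a \<Rightarrow> real) \<Rightarrow> ennreal" where
  "Kwm w \<phi> = (SUP y. ennreal ((norm (\<chi> j. \<phi> j y))\<^sup>2) / ennreal (w y))"

definition S_delta :: "nat \<Rightarrow> ('a \<Rightarrow> real) \<Rightarrow> ('m::finite \<Rightarrow> 'a \<Rightarrow> real) \<Rightarrow> real
    \<Rightarrow> (nat \<Rightarrow> 'a) measure \<Rightarrow> (nat \<Rightarrow> 'a) set" where
  "S_delta n w \<phi> \<delta> P = {x \<in> space P. lambda_min (Gw n w \<phi> x) \<ge> 1 - \<delta>}"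

definition cond_exp_event :: "'b measure \<Rightarrow> ('b \<Rightarrow> real) \<Rightarrow> 'b set \<Rightarrow> ennreal" where
  "cond_exp_event P Y S = (\<integral>\<^sup>+ \<omega>. ennreal (Y \<omega>) * indicator S \<omega> \<partial>P) / emeasure P S"

end

theory Submission
  imports Defs
begin


lemma sym_bilin:
  fixes A :: "real^'m::finite^'m"
  assumes "transpose A = A"
  shows "x \<bullet> (A *v y) = y \<bullet> (A *v x)"
proof -
  have "x \<bullet> (A *v y) = (x v* A) \<bullet> y" by (simp add: dot_lmul_matrix)
  also have "x v* A = A *v x" using transpose_matrix_vector[of A x] assms by simp
  finally show ?thesis by (simp add: inner_commute)
qed

lemma quad_zero:
  fixes b R :: real
  assumes R: "R \<ge> 0" and h: "\<And>t. 0 \<le> 2*t*b + t^2*R"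
  shows "b = 0"
proof -
  have R1: "R + 1 > 0" using R by simp
  define t where "t = - b / (R + 1)"
  have tb: "t * (R + 1) = - b" using R1 unfolding t_def by simp
  have "0 \<le> (R+1)^2 * (2*t*b + t^2*R)" using h[of t] by simp
  also have "(R+1)^2 * (2*t*b + t^2*R) = 2*b*(t*(R+1))*(R+1) + (t*(R+1))^2*R"
    by (simp add: power2_eq_square algebra_simps)
  also have "\<dots> = b^2 * (- R - 2)" unfolding tb by (simp add: power2_eq_square algebra_simps)
  finally have "0 \<le> b^2 * (- R - 2)" .
  moreover have "- R - 2 < 0" using R by simp
  ultimately have "b^2 \<le> 0" by (simp add: zero_le_mult_iff)
  then show ?thesis by simp
qed

lemma lambda_min_quad:
  fixes A :: "real^'m::finite^'m"
  assumes sym: "transpose A = A"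
  shows "lambda_min A * (x \<bullet> x) \<le> x \<bullet> (A *v x)"
proof -
  define q where "q x = x \<bullet> (A *v x)" for x :: "real^'m"
  have cont: "continuous_on (sphere 0 1) q"
    unfolding q_def by (intro continuous_intros linear_continuous_on matrix_vector_mul_bounded_linear)
  have ne: "sphere (0::real^'m) 1 \<noteq> {}" by simp
  obtain v where v: "v \<in> sphere 0 1" and vmin: "\<And>y. y \<in> sphere 0 1 \<Longrightarrow> q v \<le> q y"
    using continuous_attains_inf[OF compact_sphere ne cont] by blast
  define m where "m = q v"
  have qscale: "q (c *\<^sub>R y) = c^2 * q y" for c y
    unfolding q_def by (simp add: matrix_vector_mult_scaleR power2_eq_square algebra_simps)
  have qge: "m * (y \<bullet> y) \<le> q y" for y
  proof (cases "y = 0")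
    case True then show ?thesis by (simp add: q_def)
  next
    case False
    have "inverse (norm y) *\<^sub>R y \<in> sphere 0 1" using False by simp
    then have "m \<le> q (inverse (norm y) *\<^sub>R y)" unfolding m_def by (rule vmin)
    also have "\<dots> = q y / (y \<bullet> y)" using False
      by (simp add: qscale power_inverse dot_square_norm divide_inverse mult.commute)
    finally show ?thesis using False by (simp add: pos_le_divide_eq)
  qed
  define r where "r y = q y - m * (y \<bullet> y)" for y
  have r0: "r y \<ge> 0" for y using qge[of y] by (simp add: r_def)
  have rv: "r v = 0" using v by (simp add: r_def m_def dot_square_norm)
  have expand: "r (v + t *\<^sub>R u) = r v + 2 * t * (u \<bullet> (A *v v) - m * (u \<bullet> v)) + t^2 * r u" for t u
  proof -
    have "v \<bullet> (A *v u) = u \<bullet> (A *v v)" by (rule sym_bilin[OF sym])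
    then show ?thesis
      unfolding r_def q_def
      by (simp add: matrix_vector_right_distrib matrix_vector_mult_scaleR inner_add_left inner_add_right
          inner_commute power2_eq_square algebra_simps)
  qed
  have beta0: "u \<bullet> (A *v v) - m * (u \<bullet> v) = 0" for u
  proof (rule quad_zero[OF r0[of u]])
    fix t
    have "0 \<le> r (v + t *\<^sub>R u)" by (rule r0)
    then show "0 \<le> 2 * t * (u \<bullet> (A *v v) - m * (u \<bullet> v)) + t\<^sup>2 * r u"
      using expand[of t u] rv by simp
  qed
  have "(A *v v - m *\<^sub>R v) \<bullet> (A *v v - m *\<^sub>R v) = 0"
    using beta0[of "A *v v - m *\<^sub>R v"] by (simp add: inner_diff_left inner_diff_right algebra_simps)
  then have eig: "A *v v = m *\<^sub>R v" by simp
  have vnz: "v \<noteq> 0" using v by auto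
  have mem: "m \<in> {l. \<exists>v. v \<noteq> 0 \<and> A *v v = l *\<^sub>R v}" using eig vnz by blast
  have bdd: "bdd_below {l. \<exists>v. v \<noteq> 0 \<and> A *v v = l *\<^sub>R v}"
  proof (rule bdd_belowI[of _ m], clarify)
    fix l y assume y: "y \<noteq> (0::real^'m)" "A *v y = l *\<^sub>R y"
    have "m * (y \<bullet> y) \<le> l * (y \<bullet> y)" using qge[of y] y by (simp add: q_def)
    then show "m \<le> l" using y by simp
  qed
  have "lambda_min A \<le> m" unfolding lambda_min_def by (rule cInf_lower[OF mem bdd])
  then have "lambda_min A * (x \<bullet> x) \<le> m * (x \<bullet> x)" by (simp add: mult_right_mono)
  also have "\<dots> \<le> q x" by (rule qge)
  finally show ?thesis by (simp add: q_def)
qed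



definition ipn :: "nat \<Rightarrow> ('a \<Rightarrow> real) \<Rightarrow> (nat \<Rightarrow> 'a) \<Rightarrow> ('a \<Rightarrow> real) \<Rightarrow> ('a \<Rightarrow> real) \<Rightarrow> real" where
  "ipn n w x g h = (1 / real n) * (\<Sum>i<n. inverse (w (x i)) * g (x i) * h (x i))"

lemma emp_ipn: "emp_norm_sq n w x g = ipn n w x g g"
  unfolding emp_norm_sq_def ipn_def by (simp add: power2_eq_square mult.assoc)

lemma ipn_sym: "ipn n w x g h = ipn n w x h g"
  unfolding ipn_def by (simp add: mult_ac)

lemma ipn_Vfun: "ipn n w x (Vfun \<phi> d) h = (\<Sum>j\<in>UNIV. d$j * ipn n w x (\<phi> j) h)"
  unfolding ipn_def Vfun_def
  by (simp add: sum_distrib_left sum_distrib_right mult_ac sum.swap[of _ UNIV "{..<n}"])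

lemma ipn_add: "ipn n w x (\<lambda>y. g y + g' y) h = ipn n w x g h + ipn n w x g' h"
  unfolding ipn_def by (simp add: algebra_simps sum.distrib)

lemma Gw_mult: "(Gw n w \<phi> x *v c) $ j = ipn n w x (\<phi> j) (Vfun \<phi> c)"
proof -
  have "(Gw n w \<phi> x *v c) $ j = (\<Sum>k\<in>UNIV. ipn n w x (\<phi> j) (\<phi> k) * c$k)"
    by (simp add: matrix_vector_mult_def Gw_def ipn_def)
  also have "\<dots> = (\<Sum>k\<in>UNIV. c$k * ipn n w x (\<phi> k) (\<phi> j))"
    by (simp add: ipn_sym[of n w x "\<phi> j"] mult.commute)
  also have "\<dots> = ipn n w x (Vfun \<phi> c) (\<phi> j)"
    by (rule ipn_Vfun[symmetric])
  finally show ?thesis by (simp add: ipn_sym)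
qed

lemma Gw_quad: "c \<bullet> (Gw n w \<phi> x *v c) = emp_norm_sq n w x (Vfun \<phi> c)"
  by (simp add: inner_vec_def Gw_mult emp_ipn ipn_Vfun[of n w x \<phi> c])

lemma Gw_sym: "transpose (Gw n w \<phi> x) = Gw n w \<phi> x"
  by (simp add: transpose_def Gw_def vec_eq_iff mult_ac)

lemma Vfun_diff: "Vfun \<phi> (c - d) y = Vfun \<phi> c y - Vfun \<phi> d y"
  by (simp add: Vfun_def algebra_simps sum_subtractf)

lemma Vfun_zero: "Vfun \<phi> 0 y = 0"
  by (simp add: Vfun_def)

lemma emp_pyth:
  assumes orth: "\<And>e. ipn n w x r (Vfun \<phi> e) = 0"
  shows "emp_norm_sq n w x (\<lambda>y. r y + Vfun \<phi> e y) = emp_norm_sq n w x r + emp_norm_sq n w x (Vfun \<phi> e)"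
proof -
  have "emp_norm_sq n w x (\<lambda>y. r y + Vfun \<phi> e y) =
     emp_norm_sq n w x r + 2 * ipn n w x r (Vfun \<phi> e) + emp_norm_sq n w x (Vfun \<phi> e)"
    unfolding emp_norm_sq_def ipn_def
    by (simp add: power2_eq_square algebra_simps sum.distrib sum_distrib_left)
  then show ?thesis using orth[of e] by simp
qed

lemma lsq:
  fixes \<phi> :: "'m::finite \<Rightarrow> 'a \<Rightarrow> real" and f :: "'a \<Rightarrow> real" and x :: "nat \<Rightarrow> 'a"
  assumes pd: "\<And>c. \<alpha> * (c \<bullet> c) \<le> emp_norm_sq n w x (Vfun \<phi> c)" and apos: "\<alpha> > 0" and wnn: "\<And>y. w y \<ge> 0"
  defines "b \<equiv> (\<chi> j. ipn n w x f (\<phi> j))"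
  shows "\<exists>c. hatP n w \<phi> x f = Vfun \<phi> c \<and> \<alpha> * (c \<bullet> c) \<le> emp_norm_sq n w x f
            \<and> \<alpha>^2 * (c \<bullet> c) \<le> b \<bullet> b"
proof -
  let ?G = "Gw n w \<phi> x"
  have inj: "inj (\<lambda>c. ?G *v c)"
  proof (rule inj_onI)
    fix c1 c2 assume "?G *v c1 = ?G *v c2"
    then have "?G *v (c1 - c2) = 0" by (simp add: matrix_vector_mult_diff_distrib)
    moreover define c where "c = c1 - c2"
    ultimately have "?G *v c = 0" by simp
    then have "emp_norm_sq n w x (Vfun \<phi> c) = 0" using Gw_quad[of c n w \<phi> x] by simp
    then have "\<alpha> * (c \<bullet> c) \<le> 0" using pd[of c] by simp
    then have "c \<bullet> c \<le> 0" using apos by (simp add: mult_le_0_iff)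
    then have "c = 0" by (metis inner_eq_zero_iff order_antisym inner_ge_zero)
    then show "c1 = c2" by (simp add: c_def)
  qed
  have "surj (\<lambda>c. ?G *v c)"
    using linear_injective_imp_surjective[OF matrix_vector_mul_linear inj] by simp
  then obtain cs where cs: "?G *v cs = b" by (metis surjE)
  have orthj: "ipn n w x (\<lambda>y. f y - Vfun \<phi> cs y) (\<phi> j) = 0" for j
  proof -
    have "ipn n w x f (\<phi> j) = ipn n w x (\<lambda>y. f y - Vfun \<phi> cs y) (\<phi> j) + ipn n w x (Vfun \<phi> cs) (\<phi> j)"
      using ipn_add[of n w x "\<lambda>y. f y - Vfun \<phi> cs y" "Vfun \<phi> cs" "\<phi> j"] by simp
    moreover have "ipn n w x f (\<phi> j) = b $ j" by (simp add: b_def)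
    moreover have "ipn n w x (Vfun \<phi> cs) (\<phi> j) = b $ j"
      using cs Gw_mult[of n w \<phi> x cs j] by (simp add: ipn_sym)
    ultimately show ?thesis by simp
  qed
  have orth: "ipn n w x (\<lambda>y. f y - Vfun \<phi> cs y) (Vfun \<phi> e) = 0" for e
    by (subst ipn_sym) (simp add: ipn_Vfun ipn_sym[of n w x "\<phi> _"] orthj)
  have pyth: "emp_norm_sq n w x (\<lambda>y. f y - Vfun \<phi> d y) =
      emp_norm_sq n w x (\<lambda>y. f y - Vfun \<phi> cs y) + emp_norm_sq n w x (Vfun \<phi> (cs - d))" for d
  proof -
    have "(\<lambda>y. f y - Vfun \<phi> d y) = (\<lambda>y. (f y - Vfun \<phi> cs y) + Vfun \<phi> (cs - d) y)"
      by (simp add: Vfun_diff)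
    then show ?thesis using emp_pyth[OF orth, of "cs - d"] by simp
  qed
  have emp_nn: "emp_norm_sq n w x (Vfun \<phi> e) \<ge> \<alpha> * (e \<bullet> e)" for e by (rule pd)
  have the: "(THE c. \<forall>d. emp_norm_sq n w x (\<lambda>y. f y - Vfun \<phi> c y)
                      \<le> emp_norm_sq n w x (\<lambda>y. f y - Vfun \<phi> d y)) = cs"
  proof (rule the_equality)
    show "\<forall>d. emp_norm_sq n w x (\<lambda>y. f y - Vfun \<phi> cs y) \<le> emp_norm_sq n w x (\<lambda>y. f y - Vfun \<phi> d y)"
    proof
      fix d
      have "0 \<le> \<alpha> * ((cs - d) \<bullet> (cs - d))" using apos by simp
      then show "emp_norm_sq n w x (\<lambda>y. f y - Vfun \<phi> cs y) \<le> emp_norm_sq n w x (\<lambda>y. f y - Vfun \<phi> d y)"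
        using pyth[of d] emp_nn[of "cs - d"] by linarith
    qed
  next
    fix c assume "\<forall>d. emp_norm_sq n w x (\<lambda>y. f y - Vfun \<phi> c y) \<le> emp_norm_sq n w x (\<lambda>y. f y - Vfun \<phi> d y)"
    then have "emp_norm_sq n w x (\<lambda>y. f y - Vfun \<phi> c y) \<le> emp_norm_sq n w x (\<lambda>y. f y - Vfun \<phi> cs y)"
      by blast
    then have "\<alpha> * ((cs - c) \<bullet> (cs - c)) \<le> 0" using pyth[of c] emp_nn[of "cs - c"] by linarith
    then have "(cs - c) \<bullet> (cs - c) \<le> 0" using apos by (simp add: mult_le_0_iff)
    then have "cs - c = 0" by (metis inner_eq_zero_iff order_antisym inner_ge_zero)
    then show "c = cs" by simp
  qed
  have hat: "hatP n w \<phi> x f = Vfun \<phi> cs" unfolding hatP_def the ..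
  have f0: "(\<lambda>y. f y - Vfun \<phi> 0 y) = f" by (simp add: Vfun_zero)
  have "emp_norm_sq n w x f = emp_norm_sq n w x (\<lambda>y. f y - Vfun \<phi> cs y) + emp_norm_sq n w x (Vfun \<phi> cs)"
    using pyth[of 0] by (simp add: f0)
  moreover have "emp_norm_sq n w x (\<lambda>y. f y - Vfun \<phi> cs y) \<ge> 0"
    unfolding emp_norm_sq_def using wnn by (intro mult_nonneg_nonneg sum_nonneg) auto
  ultimately have b1: "\<alpha> * (cs \<bullet> cs) \<le> emp_norm_sq n w x f" using pd[of cs] by linarith
  have "\<alpha> * (cs \<bullet> cs) \<le> cs \<bullet> b" using pd[of cs] Gw_quad[of cs n w \<phi> x] cs by simp
  then have b2: "\<alpha>^2 * (cs \<bullet> cs) \<le> b \<bullet> b"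
  proof (cases "cs = 0")
    case True then show ?thesis by simp
  next
    case False
    assume h: "\<alpha> * (cs \<bullet> cs) \<le> cs \<bullet> b"
    have pos: "cs \<bullet> cs > 0" using False by simp
    have "cs \<bullet> b \<le> norm cs * norm b" by (rule norm_cauchy_schwarz)
    then have "(\<alpha> * (cs \<bullet> cs))^2 \<le> (norm cs * norm b)^2"
      using h apos pos by (intro power_mono) auto
    also have "\<dots> = (cs \<bullet> cs) * (b \<bullet> b)" by (simp add: power_mult_distrib dot_square_norm)
    finally have "(cs \<bullet> cs) * (\<alpha>^2 * (cs \<bullet> cs)) \<le> (cs \<bullet> cs) * (b \<bullet> b)"
      by (simp add: power2_eq_square mult_ac)
    then show ?thesis using pos by simp
  qed
  show ?thesis using hat b1 b2 by blast
qed



lemma abs_prod_le: "\<bar>a*b\<bar> \<le> a^2 + b^2" for a b :: real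
proof -
  have "0 \<le> (\<bar>a\<bar> - \<bar>b\<bar>)^2" by simp
  then have "2*(\<bar>a\<bar>*\<bar>b\<bar>) \<le> \<bar>a\<bar>^2 + \<bar>b\<bar>^2" by (simp add: power2_eq_square algebra_simps)
  moreover have "0 \<le> \<bar>a\<bar>*\<bar>b\<bar>" by simp
  ultimately show ?thesis unfolding abs_mult power2_abs by linarith
qed

lemma L2_prod_integrable:
  fixes g h :: "'a \<Rightarrow> real"
  assumes "g \<in> borel_measurable M" "h \<in> borel_measurable M"
    "integrable M (\<lambda>y. (g y)\<^sup>2)" "integrable M (\<lambda>y. (h y)\<^sup>2)"
  shows "integrable M (\<lambda>y. g y * h y)"
proof (rule Bochner_Integration.integrable_bound[of _ "\<lambda>y. (g y)\<^sup>2 + (h y)\<^sup>2"])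
  show "integrable M (\<lambda>y. (g y)\<^sup>2 + (h y)\<^sup>2)" using assms by simp
  show "(\<lambda>y. g y * h y) \<in> borel_measurable M" using assms by simp
  show "AE x in M. norm (g x * h x) \<le> norm ((g x)\<^sup>2 + (h x)\<^sup>2)"
  proof (rule AE_I2)
    fix x
    have "\<bar>g x * h x\<bar> \<le> (g x)\<^sup>2 + (h x)\<^sup>2" by (rule abs_prod_le)
    then show "norm (g x * h x) \<le> norm ((g x)\<^sup>2 + (h x)\<^sup>2)" by simp
  qed
qed

lemma L2_Vfun:
  fixes \<phi> :: "'m::finite \<Rightarrow> 'a \<Rightarrow> real"
  assumes phi_meas: "\<And>j. \<phi> j \<in> borel_measurable \<mu>"
    and phi_L2: "\<And>j. integrable \<mu> (\<lambda>y. (\<phi> j y)\<^sup>2)"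
    and phi_orth: "\<And>j k. (\<integral>y. \<phi> j y * \<phi> k y \<partial>\<mu>) = (if j = k then 1 else 0)"
  shows "L2norm_sq \<mu> (Vfun \<phi> c) = c \<bullet> c"
proof -
  have int: "integrable \<mu> (\<lambda>y. \<phi> j y * \<phi> k y)" for j k
    by (rule L2_prod_integrable[OF phi_meas phi_meas phi_L2 phi_L2])
  have "(\<lambda>y. (Vfun \<phi> c y)\<^sup>2) = (\<lambda>y. \<Sum>j\<in>UNIV. \<Sum>k\<in>UNIV. c$j * c$k * (\<phi> j y * \<phi> k y))"
    by (simp add: Vfun_def power2_eq_square sum_product mult_ac)
  then have "L2norm_sq \<mu> (Vfun \<phi> c) = (\<Sum>j\<in>UNIV. \<Sum>k\<in>UNIV. c$j * c$k * (\<integral>y. \<phi> j y * \<phi> k y \<partial>\<mu>))"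
    unfolding L2norm_sq_def using int
    by (simp add: integral_sum integrable_sum)
  also have "\<dots> = (\<Sum>j\<in>UNIV. c$j * c$j)"
    by (simp add: phi_orth if_distrib cong: if_cong)
  finally show ?thesis by (simp add: inner_vec_def)
qed

lemma coord_int:
  fixes g :: "'a \<Rightarrow> real" and n i :: nat
  assumes nu: "prob_space \<nu>" and g: "integrable \<nu> g" and i: "i < n"
  shows "integrable (PiM {..<n} (\<lambda>_. \<nu>)) (\<lambda>x. g (x i))"
    "(\<integral>x. g (x i) \<partial>PiM {..<n} (\<lambda>_. \<nu>)) = (\<integral>y. g y \<partial>\<nu>)"
proof -
  interpret prob_space \<nu> by (rule nu)
  interpret P: product_sigma_finite "\<lambda>_. \<nu>"
    by (simp add: product_sigma_finite_def sigma_finite_measure_axioms)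
  define F where "F l = (\<lambda>y. if l = i then g y else (1::real))" for l
  have Fint: "\<And>l. l \<in> {..<n} \<Longrightarrow> integrable \<nu> (F l)" using g
    by (case_tac "l = i") (simp_all add: F_def)
  have eq: "(\<Prod>l\<in>{..<n}. F l (x l)) = g (x i)" for x
    using i by (simp add: F_def prod.delta)
  show "integrable (PiM {..<n} (\<lambda>_. \<nu>)) (\<lambda>x. g (x i))"
    using P.product_integrable_prod[of "{..<n}" F, OF _ Fint] by (simp add: eq)
  show "(\<integral>x. g (x i) \<partial>PiM {..<n} (\<lambda>_. \<nu>)) = (\<integral>y. g y \<partial>\<nu>)"
  proof -
    have "(\<integral>x. g (x i) \<partial>PiM {..<n} (\<lambda>_. \<nu>)) = (\<integral>x. (\<Prod>l\<in>{..<n}. F l (x l)) \<partial>PiM {..<n} (\<lambda>_. \<nu>))"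
      by (simp only: eq)
    also have "\<dots> = (\<Prod>l\<in>{..<n}. integral\<^sup>L \<nu> (F l))"
      by (rule P.product_integral_prod[of "{..<n}" F, OF _ Fint]) auto
    also have "\<dots> = (\<Prod>l\<in>{..<n}. if l = i then integral\<^sup>L \<nu> g else 1)"
      by (intro prod.cong) (auto simp: F_def prob_space)
    finally show ?thesis using i by (simp add: prod.delta)
  qed
qed

lemma pair_int:
  fixes g h :: "'a \<Rightarrow> real" and n i k :: nat
  assumes nu: "prob_space \<nu>" and g: "integrable \<nu> g" and h: "integrable \<nu> h"
    and i: "i < n" and k: "k < n" and ik: "i \<noteq> k"
  shows "integrable (PiM {..<n} (\<lambda>_. \<nu>)) (\<lambda>x. g (x i) * h (x k))"
    "(\<integral>x. g (x i) * h (x k) \<partial>PiM {..<n} (\<lambda>_. \<nu>)) = (\<integral>y. g y \<partial>\<nu>) * (\<integral>y. h y \<partial>\<nu>)"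
proof -
  interpret prob_space \<nu> by (rule nu)
  interpret P: product_sigma_finite "\<lambda>_. \<nu>"
    by (simp add: product_sigma_finite_def sigma_finite_measure_axioms)
  define F where "F l = (if l = i then g else if l = k then h else (\<lambda>_. 1::real))" for l
  have Fint: "\<And>l. l \<in> {..<n} \<Longrightarrow> integrable \<nu> (F l)" using g h by (simp add: F_def)
  have gen: "(\<Prod>l\<in>{..<n}. G l) = G i * G k" if "\<And>l. l \<noteq> i \<Longrightarrow> l \<noteq> k \<Longrightarrow> G l = 1" for G :: "nat \<Rightarrow> real"
  proof -
    have "(\<Prod>l\<in>{..<n}. G l) = G i * (\<Prod>l\<in>{..<n} - {i}. G l)"
      using i by (simp add: prod.remove)
    also have "(\<Prod>l\<in>{..<n} - {i}. G l) = G k * (\<Prod>l\<in>{..<n} - {i} - {k}. G l)"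
      using k ik by (intro prod.remove) auto
    also have "(\<Prod>l\<in>{..<n} - {i} - {k}. G l) = 1" using that by (intro prod.neutral) auto
    finally show ?thesis by simp
  qed
  have eq: "(\<Prod>l\<in>{..<n}. F l (x l)) = g (x i) * h (x k)" for x
    using gen[of "\<lambda>l. F l (x l)"] ik by (simp add: F_def)
  show "integrable (PiM {..<n} (\<lambda>_. \<nu>)) (\<lambda>x. g (x i) * h (x k))"
    using P.product_integrable_prod[of "{..<n}" F, OF _ Fint] by (simp add: eq)
  have "(\<Prod>l\<in>{..<n}. integral\<^sup>L \<nu> (F l)) = integral\<^sup>L \<nu> (F i) * integral\<^sup>L \<nu> (F k)"
    by (rule gen) (simp add: F_def prob_space)
  moreover have "(\<integral>x. g (x i) * h (x k) \<partial>PiM {..<n} (\<lambda>_. \<nu>)) = (\<integral>x. (\<Prod>l\<in>{..<n}. F l (x l)) \<partial>PiM {..<n} (\<lambda>_. \<nu>))"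
    by (simp only: eq)
  moreover have "\<dots> = (\<Prod>l\<in>{..<n}. integral\<^sup>L \<nu> (F l))"
    by (rule P.product_integral_prod[of "{..<n}" F, OF _ Fint]) auto
  ultimately show "(\<integral>x. g (x i) * h (x k) \<partial>PiM {..<n} (\<lambda>_. \<nu>)) = (\<integral>y. g y \<partial>\<nu>) * (\<integral>y. h y \<partial>\<nu>)"
    using ik by (simp add: F_def)
qed



lemma cond_bound:
  fixes P :: "'b measure" and H Z :: "'b \<Rightarrow> real"
  assumes P: "prob_space P" and pos: "measure P S > 0" and Zint: "integrable P Z"
    and Znn: "\<And>x. x \<in> space P \<Longrightarrow> 0 \<le> Z x" and HZ: "\<And>x. x \<in> S \<Longrightarrow> H x \<le> C * Z x"
    and C: "C \<ge> 0" and B: "(\<integral>x. Z x \<partial>P) \<le> B"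
  shows "cond_exp_event P H S \<le> ennreal (inverse (measure P S) * C * B)"
proof -
  interpret prob_space P by (rule P)
  have "(\<integral>\<^sup>+ x. ennreal (H x) * indicator S x \<partial>P) \<le> (\<integral>\<^sup>+ x. ennreal (C * Z x) \<partial>P)"
  proof (rule nn_integral_mono)
    fix x assume "x \<in> space P"
    show "ennreal (H x) * indicator S x \<le> ennreal (C * Z x)"
      by (cases "x \<in> S") (auto intro: ennreal_leI HZ)
  qed
  also have "\<dots> = ennreal (\<integral>x. C * Z x \<partial>P)"
    using Zint Znn C by (intro nn_integral_eq_integral) auto
  also have "\<dots> \<le> ennreal (C * B)"
    using B C by (intro ennreal_leI) (simp add: mult_left_mono)
  finally have num: "(\<integral>\<^sup>+ x. ennreal (H x) * indicator S x \<partial>P) \<le> ennreal (C * B)" .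
  have "0 \<le> (\<integral>x. Z x \<partial>P)" by (rule Bochner_Integration.integral_nonneg) (rule Znn)
  then have Bnn: "0 \<le> B" using B by linarith
  have "cond_exp_event P H S \<le> ennreal (C * B) / ennreal (measure P S)"
    unfolding cond_exp_event_def emeasure_eq_measure by (rule divide_right_mono_ennreal[OF num])
  also have "\<dots> = ennreal (C * B / measure P S)"
    using pos Bnn C by (intro divide_ennreal) auto
  finally show ?thesis by (simp add: field_simps)
qed

lemma double_sum_if:
  "(\<Sum>i<n. \<Sum>k<n. if i = k then A else B) = real n * A + (real n * real n - real n) * (B::real)"
proof -
  have "(\<Sum>k<n. if i = k then A else B) = A + (real n - 1) * B" if "i < n" for i
  proof -
    have "(\<Sum>k<n. if i = k then A else B) = (\<Sum>k<n. B + (if i = k then A - B else 0))"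
      by (intro sum.cong) auto
    also have "\<dots> = real n * B + (A - B)" using that by (simp add: sum.distrib)
    finally show ?thesis by (simp add: algebra_simps)
  qed
  then have "(\<Sum>i<n. \<Sum>k<n. if i = k then A else B) = (\<Sum>i<n. A + (real n - 1) * B)"
    by (intro sum.cong) auto
  also have "\<dots> = real n * A + (real n * real n - real n) * B" by (simp add: algebra_simps)
  finally show ?thesis .
qed

lemma count_bound:
  assumes "A \<ge> 0" "B \<ge> 0"
  shows "(1 / real n)\<^sup>2 * (real n * A + (real n * real n - real n) * B) \<le> A / real n + (B::real)"
proof (cases "n = 0")
  case True then show ?thesis using assms by simp
next
  case False
  then have np: "real n \<ge> 1" by simp
  have "(1 / real n)\<^sup>2 * (real n * A + (real n * real n - real n) * B) = A / real n + B - B / real n"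
    using False by (simp add: power2_eq_square field_simps)
  also have "\<dots> \<le> A / real n + B" using assms np by simp
  finally show ?thesis .
qed



theorem mainTheorem4:
  fixes \<mu> :: "'a::polish_space measure"
    and w :: "'a \<Rightarrow> real"
    and \<phi> :: "'m::finite \<Rightarrow> 'a \<Rightarrow> real"
    and n :: nat and \<delta> :: real
    and f :: "'a \<Rightarrow> real"
  assumes mu: "prob_space \<mu>" "sets \<mu> = sets borel"
    and phi_meas: "\<And>j. \<phi> j \<in> borel_measurable \<mu>"
    and phi_L2: "\<And>j. integrable \<mu> (\<lambda>y. (\<phi> j y)\<^sup>2)"
    and phi_orth: "\<And>j k. (\<integral>y. \<phi> j y * \<phi> k y \<partial>\<mu>) = (if j = k then 1 else 0)"
    and w_meas: "w \<in> borel_measurable \<mu>"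
    and w_nonneg: "\<And>y. w y \<ge> 0"
    and w_dens: "(\<integral>\<^sup>+ y. ennreal (w y) \<partial>\<mu>) = 1"
    and delta: "0 < \<delta>" "\<delta> < 1"
    and PS: "measure (PiM {..<n} (\<lambda>_. density \<mu> w)) (S_delta n w \<phi> \<delta> (PiM {..<n} (\<lambda>_. density \<mu> w))) > 0"
    and K_fin: "Kwm w \<phi> < \<top>"
    and f_meas: "f \<in> borel_measurable \<mu>"
    and f_L2: "integrable \<mu> (\<lambda>y. (f y)\<^sup>2)"
  shows
    "let P = PiM {..<n} (\<lambda>_. density \<mu> w); S = S_delta n w \<phi> \<delta> P;
         E = cond_exp_event P (\<lambda>x. L2norm_sq \<mu> (hatP n w \<phi> x f)) S
     in E \<le> ennreal (inverse (measure P S) * inverse (1 - \<delta>) * L2norm_sq \<mu> f)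
      \<and> E \<le> ennreal (inverse (measure P S) * inverse ((1 - \<delta>)\<^sup>2) *
                (L2norm_sq \<mu> (Pproj \<mu> \<phi> f) + enn2real (Kwm w \<phi>) / real n * L2norm_sq \<mu> f))"
proof -
  define \<nu> where "\<nu> = density \<mu> w"
  define P where "P = PiM {..<n} (\<lambda>_. \<nu>)"
  define S where "S = S_delta n w \<phi> \<delta> P"
  define Kr where "Kr = enn2real (Kwm w \<phi>)"
  interpret mu: prob_space \<mu> by (rule mu(1))
  note [measurable] = w_meas phi_meas f_meas
  have sets_nu: "sets \<nu> = sets \<mu>" by (simp add: \<nu>_def)
  have space_nu: "space \<nu> = space \<mu>" by (simp add: \<nu>_def)
  have nu: "prob_space \<nu>"
  proof (rule prob_spaceI)
    have "emeasure \<nu> (space \<nu>) = (\<integral>\<^sup>+ y. ennreal (w y) * indicator (space \<mu>) y \<partial>\<mu>)"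
      unfolding \<nu>_def by (simp add: emeasure_density)
    also have "\<dots> = (\<integral>\<^sup>+ y. ennreal (w y) \<partial>\<mu>)"
      by (intro nn_integral_cong) simp
    finally show "emeasure \<nu> (space \<nu>) = 1" using w_dens by simp
  qed
  interpret nu: prob_space \<nu> by (rule nu)
  have Pprob: "prob_space P" unfolding P_def by (intro prob_space_PiM nu)
  have meas_nu: "g \<in> borel_measurable \<nu>" if "g \<in> borel_measurable \<mu>" for g :: "'a \<Rightarrow> real"
    using measurable_cong_sets[OF sets_nu refl, of borel] that by blast
  have int_nu: "integral\<^sup>L \<nu> g = (\<integral>y. w y * g y \<partial>\<mu>)" if "g \<in> borel_measurable \<mu>" for g :: "'a \<Rightarrow> real"
    unfolding \<nu>_def using that w_nonneg by (subst integral_density) auto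
  have integ_nu: "integrable \<nu> g \<longleftrightarrow> integrable \<mu> (\<lambda>y. w y * g y)" if "g \<in> borel_measurable \<mu>" for g :: "'a \<Rightarrow> real"
    unfolding \<nu>_def using that w_nonneg by (subst integrable_density) auto
  have Kr0: "Kr \<ge> 0" by (simp add: Kr_def)
  have KK: "Kwm w \<phi> = ennreal Kr" using K_fin by (simp add: Kr_def)
  have normsq: "(norm (\<chi> j. \<phi> j y))\<^sup>2 = (\<Sum>j\<in>UNIV. (\<phi> j y)\<^sup>2)" for y
    by (simp only: power2_norm_eq_inner) (simp add: inner_vec_def power2_eq_square)
  have Kle: "ennreal ((norm (\<chi> j. \<phi> j y))\<^sup>2) / ennreal (w y) \<le> ennreal Kr" for y
    unfolding KK[symmetric] Kwm_def by (rule SUP_upper) simp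
  have Kbound: "inverse (w y) * (\<Sum>j\<in>UNIV. (\<phi> j y)\<^sup>2) \<le> Kr" for y
  proof (cases "w y = 0")
    case True then show ?thesis using Kr0 by simp
  next
    case False
    then have wp: "w y > 0" using w_nonneg[of y] by simp
    have "ennreal ((norm (\<chi> j. \<phi> j y))\<^sup>2 / w y) \<le> ennreal Kr"
      using Kle[of y] wp by (subst (asm) divide_ennreal) auto
    then have "(norm (\<chi> j. \<phi> j y))\<^sup>2 / w y \<le> Kr" using Kr0 by (simp add: ennreal_le_iff)
    then show ?thesis by (simp add: normsq divide_inverse mult.commute)
  qed
  have phi0: "\<phi> j y = 0" if "w y = 0" for j y
  proof (rule ccontr)
    assume "\<phi> j y \<noteq> 0"
    then have "(\<chi> j. \<phi> j y) \<noteq> 0" by (metis vec_lambda_beta zero_index)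
    then have np: "(norm (\<chi> j. \<phi> j y))\<^sup>2 > 0" by simp
    have "ennreal ((norm (\<chi> j. \<phi> j y))\<^sup>2) / ennreal (w y) = \<top>"
      using np that by (simp add: divide_ennreal_def ennreal_mult_top)
    then show False using Kle[of y] by (simp add: top_unique)
  qed
  define g0 where "g0 y = inverse (w y) * (f y)\<^sup>2" for y
  define Y where "Y j y = inverse (w y) * f y * \<phi> j y" for j y
  define a where "a j = (\<integral>y. f y * \<phi> j y \<partial>\<mu>)" for j
  define m2 where "m2 j = (\<integral>y. (Y j y)\<^sup>2 \<partial>\<nu>)" for j
  have g0m[measurable]: "g0 \<in> borel_measurable \<mu>" unfolding g0_def by measurable
  have Ym[measurable]: "Y j \<in> borel_measurable \<mu>" for j unfolding Y_def by measurable
  have g0nn: "g0 y \<ge> 0" for y using w_nonneg[of y] by (simp add: g0_def)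
  have wg0: "\<bar>w y * g0 y\<bar> \<le> (f y)\<^sup>2" for y
    by (cases "w y = 0") (simp_all add: g0_def flip: mult.assoc)
  have int_wg0: "integrable \<mu> (\<lambda>y. w y * g0 y)"
    by (rule Bochner_Integration.integrable_bound[OF f_L2]) (auto simp: wg0)
  have I1: "integrable \<nu> g0" using int_wg0 integ_nu[OF g0m] by simp
  have E1: "(\<integral>y. g0 y \<partial>\<nu>) \<le> L2norm_sq \<mu> f"
  proof -
    have "(\<integral>y. g0 y \<partial>\<nu>) = (\<integral>y. w y * g0 y \<partial>\<mu>)" by (rule int_nu[OF g0m])
    also have "\<dots> \<le> (\<integral>y. (f y)\<^sup>2 \<partial>\<mu>)"
      using int_wg0 f_L2 wg0 by (intro integral_mono) (auto simp: abs_le_iff)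
    finally show ?thesis by (simp add: L2norm_sq_def)
  qed
  have wY: "w y * Y j y = f y * \<phi> j y" for j y
    by (cases "w y = 0") (simp_all add: Y_def phi0)
  have int_fphi: "integrable \<mu> (\<lambda>y. f y * \<phi> j y)" for j
    by (rule L2_prod_integrable[OF f_meas phi_meas f_L2 phi_L2])
  have I2: "integrable \<nu> (Y j)" for j using int_fphi[of j] integ_nu[OF Ym[of j]] by (simp add: wY)
  have E2: "(\<integral>y. Y j y \<partial>\<nu>) = a j" for j using int_nu[OF Ym[of j]] by (simp add: wY a_def)
  have wY2: "w y * (Y j y)\<^sup>2 = inverse (w y) * (f y)\<^sup>2 * (\<phi> j y)\<^sup>2" for j y
    by (cases "w y = 0") (simp_all add: Y_def power2_eq_square field_simps)
  have Kb1: "inverse (w y) * (\<phi> j y)\<^sup>2 \<le> Kr" for j y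
  proof -
    have "(\<phi> j y)\<^sup>2 \<le> (\<Sum>j\<in>UNIV. (\<phi> j y)\<^sup>2)"
      by (rule member_le_sum[where f="\<lambda>j. (\<phi> j y)\<^sup>2"]) auto
    then have "inverse (w y) * (\<phi> j y)\<^sup>2 \<le> inverse (w y) * (\<Sum>j\<in>UNIV. (\<phi> j y)\<^sup>2)"
      using w_nonneg[of y] by (intro mult_left_mono) auto
    then show ?thesis using Kbound[of y] by linarith
  qed
  have wY2b: "\<bar>w y * (Y j y)\<^sup>2\<bar> \<le> Kr * (f y)\<^sup>2" for j y
  proof -
    have "0 \<le> inverse (w y) * (f y)\<^sup>2 * (\<phi> j y)\<^sup>2" using w_nonneg[of y] by simp
    moreover have "inverse (w y) * (f y)\<^sup>2 * (\<phi> j y)\<^sup>2 = (inverse (w y) * (\<phi> j y)\<^sup>2) * (f y)\<^sup>2"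
      by (simp add: mult_ac)
    moreover have "\<dots> \<le> Kr * (f y)\<^sup>2" using Kb1[of y j] by (intro mult_right_mono) auto
    ultimately show ?thesis by (simp add: wY2 mult_ac)
  qed
  have int_wY2: "integrable \<mu> (\<lambda>y. w y * (Y j y)\<^sup>2)" for j
    by (rule Bochner_Integration.integrable_bound[of _ "\<lambda>y. Kr * (f y)\<^sup>2"])
       (use f_L2 wY2b Kr0 in \<open>auto simp: abs_mult\<close>)
  have I3: "integrable \<nu> (\<lambda>y. (Y j y)\<^sup>2)" for j
    using int_wY2[of j] integ_nu[of "\<lambda>y. (Y j y)\<^sup>2"] by simp
  have E3: "(\<Sum>j\<in>UNIV. m2 j) \<le> Kr * L2norm_sq \<mu> f"
  proof -
    have "(\<Sum>j\<in>UNIV. m2 j) = (\<Sum>j\<in>UNIV. \<integral>y. inverse (w y) * (f y)\<^sup>2 * (\<phi> j y)\<^sup>2 \<partial>\<mu>)"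
      unfolding m2_def by (intro sum.cong refl) (simp add: int_nu wY2)
    also have "\<dots> = (\<integral>y. (\<Sum>j\<in>UNIV. inverse (w y) * (f y)\<^sup>2 * (\<phi> j y)\<^sup>2) \<partial>\<mu>)"
      by (rule Bochner_Integration.integral_sum[symmetric]) (use int_wY2 in \<open>simp add: wY2\<close>)
    also have "\<dots> \<le> (\<integral>y. Kr * (f y)\<^sup>2 \<partial>\<mu>)"
    proof (rule integral_mono)
      show "integrable \<mu> (\<lambda>y. \<Sum>j\<in>UNIV. inverse (w y) * (f y)\<^sup>2 * (\<phi> j y)\<^sup>2)"
        using int_wY2 by (auto simp: wY2)
      show "integrable \<mu> (\<lambda>y. Kr * (f y)\<^sup>2)" using f_L2 by simp
      fix y
      have "(\<Sum>j\<in>UNIV. inverse (w y) * (f y)\<^sup>2 * (\<phi> j y)\<^sup>2) = (inverse (w y) * (\<Sum>j\<in>UNIV. (\<phi> j y)\<^sup>2)) * (f y)\<^sup>2"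
        by (simp add: sum_distrib_left sum_distrib_right mult_ac)
      also have "\<dots> \<le> Kr * (f y)\<^sup>2" using Kbound[of y] by (intro mult_right_mono) auto
      finally show "(\<Sum>j\<in>UNIV. inverse (w y) * (f y)\<^sup>2 * (\<phi> j y)\<^sup>2) \<le> Kr * (f y)\<^sup>2" .
    qed
    finally show ?thesis by (simp add: L2norm_sq_def)
  qed
  have m2nn: "m2 j \<ge> 0" for j unfolding m2_def by (rule Bochner_Integration.integral_nonneg) simp
  have Pf: "L2norm_sq \<mu> (Pproj \<mu> \<phi> f) = (\<Sum>j\<in>UNIV. (a j)\<^sup>2)"
    unfolding Pproj_def using L2_Vfun[OF phi_meas phi_L2 phi_orth]
    by (simp add: inner_vec_def a_def power2_eq_square)
  define Z1 where "Z1 x = (1 / real n) * (\<Sum>i<n. g0 (x i))" for x :: "nat \<Rightarrow> 'a"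
  define bv where "bv x = (\<chi> j. ipn n w x f (\<phi> j))" for x :: "nat \<Rightarrow> 'a"
  define Z2 where "Z2 x = bv x \<bullet> bv x" for x :: "nat \<Rightarrow> 'a"
  have Z1emp: "emp_norm_sq n w x f = Z1 x" for x
    by (simp add: emp_norm_sq_def Z1_def g0_def)
  have Z1int: "integrable P Z1"
  proof -
    have "integrable P (\<lambda>x. \<Sum>i<n. g0 (x i))" unfolding P_def
      by (rule Bochner_Integration.integrable_sum) (rule coord_int(1)[OF nu I1], simp)
    then show ?thesis unfolding Z1_def by (rule integrable_mult_right)
  qed
  have Z1nn: "Z1 x \<ge> 0" for x unfolding Z1_def using g0nn by (simp add: sum_nonneg)
  have EZ1: "(\<integral>x. Z1 x \<partial>P) \<le> L2norm_sq \<mu> f"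
  proof -
    have "(\<integral>x. Z1 x \<partial>P) = (1 / real n) * (\<Sum>i<n. \<integral>x. g0 (x i) \<partial>P)"
      unfolding Z1_def P_def
      by (simp add: Bochner_Integration.integral_sum coord_int(1)[OF nu I1])
    also have "\<dots> = (1 / real n) * (real n * (\<integral>y. g0 y \<partial>\<nu>))"
      unfolding P_def by (simp add: coord_int(2)[OF nu I1])
    also have "\<dots> \<le> (\<integral>y. g0 y \<partial>\<nu>)"
    proof -
      have "0 \<le> (\<integral>y. g0 y \<partial>\<nu>)" by (rule Bochner_Integration.integral_nonneg) (simp add: g0nn)
      then show ?thesis by (cases "n = 0") auto
    qed
    finally show ?thesis using E1 by linarith
  qed
  define T where "T j i k x = Y j (x i) * Y j (x k)" for j i k and x :: "nat \<Rightarrow> 'a"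
  have Tint: "integrable P (T j i k)" and TE: "(\<integral>x. T j i k x \<partial>P) = (if i = k then m2 j else (a j)\<^sup>2)"
    if "i < n" "k < n" for j i k
  proof -
    have "integrable P (T j i k) \<and> (\<integral>x. T j i k x \<partial>P) = (if i = k then m2 j else (a j)\<^sup>2)"
    proof (cases "i = k")
      case True
      have eq: "T j i k = (\<lambda>x. (\<lambda>y. (Y j y)\<^sup>2) (x i))"
        using True by (simp add: T_def fun_eq_iff power2_eq_square)
      show ?thesis unfolding eq P_def using coord_int[OF nu I3[of j] that(1)] True
        by (simp add: m2_def)
    next
      case False
      show ?thesis unfolding P_def T_def using pair_int[OF nu I2[of j] I2[of j] that False] False
        by (simp add: E2 power2_eq_square)
    qed
    then show "integrable P (T j i k)" "(\<integral>x. T j i k x \<partial>P) = (if i = k then m2 j else (a j)\<^sup>2)"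
      by auto
  qed
  have Z2eq: "Z2 = (\<lambda>x. \<Sum>j\<in>UNIV. (1 / real n)\<^sup>2 * (\<Sum>i<n. \<Sum>k<n. T j i k x))"
  proof
    fix x
    have "ipn n w x f (\<phi> j) = (1 / real n) * (\<Sum>i<n. Y j (x i))" for j
      by (simp add: ipn_def Y_def)
    then show "Z2 x = (\<Sum>j\<in>UNIV. (1 / real n)\<^sup>2 * (\<Sum>i<n. \<Sum>k<n. T j i k x))"
      by (simp add: Z2_def bv_def inner_vec_def T_def power2_eq_square sum_product mult_ac)
  qed
  have Z2int: "integrable P Z2"
    unfolding Z2eq by (intro Bochner_Integration.integrable_sum integrable_mult_right Tint) auto
  have Z2nn: "Z2 x \<ge> 0" for x unfolding Z2_def by simp
  have EZ2: "(\<integral>x. Z2 x \<partial>P) \<le> L2norm_sq \<mu> (Pproj \<mu> \<phi> f) + Kr / real n * L2norm_sq \<mu> f"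
  proof -
    have inner: "(\<integral>x. (\<Sum>i<n. \<Sum>k<n. T j i k x) \<partial>P) = (\<Sum>i<n. \<Sum>k<n. \<integral>x. T j i k x \<partial>P)" for j
    proof -
      have "(\<integral>x. (\<Sum>i<n. \<Sum>k<n. T j i k x) \<partial>P) = (\<Sum>i<n. \<integral>x. (\<Sum>k<n. T j i k x) \<partial>P)"
        by (rule Bochner_Integration.integral_sum) (auto intro!: Bochner_Integration.integrable_sum Tint)
      also have "\<dots> = (\<Sum>i<n. \<Sum>k<n. \<integral>x. T j i k x \<partial>P)"
        by (intro sum.cong refl Bochner_Integration.integral_sum) (auto intro: Tint)
      finally show ?thesis .
    qed
    have intj: "integrable P (\<lambda>x. (1 / real n)\<^sup>2 * (\<Sum>i<n. \<Sum>k<n. T j i k x))" for j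
      by (intro integrable_mult_right Bochner_Integration.integrable_sum Tint) auto
    have "(\<integral>x. Z2 x \<partial>P) = (\<Sum>j\<in>UNIV. \<integral>x. (1 / real n)\<^sup>2 * (\<Sum>i<n. \<Sum>k<n. T j i k x) \<partial>P)"
      unfolding Z2eq by (rule Bochner_Integration.integral_sum) (rule intj)
    also have "\<dots> = (\<Sum>j\<in>UNIV. (1 / real n)\<^sup>2 * (\<Sum>i<n. \<Sum>k<n. \<integral>x. T j i k x \<partial>P))"
      by (simp add: inner)
    finally have "(\<integral>x. Z2 x \<partial>P) = (\<Sum>j\<in>UNIV. (1 / real n)\<^sup>2 * (\<Sum>i<n. \<Sum>k<n. \<integral>x. T j i k x \<partial>P))" .
    also have "\<dots> = (\<Sum>j\<in>UNIV. (1 / real n)\<^sup>2 * (\<Sum>i<n. \<Sum>k<n. if i = k then m2 j else (a j)\<^sup>2))"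
      by (intro sum.cong refl arg_cong2[where f="(*)"]) (simp add: TE)
    also have "\<dots> = (\<Sum>j\<in>UNIV. (1 / real n)\<^sup>2 * (real n * m2 j + (real n * real n - real n) * (a j)\<^sup>2))"
      by (simp add: double_sum_if)
    also have "\<dots> \<le> (\<Sum>j\<in>UNIV. m2 j / real n + (a j)\<^sup>2)"
      by (intro sum_mono count_bound m2nn) simp
    also have "\<dots> = (\<Sum>j\<in>UNIV. m2 j) / real n + (\<Sum>j\<in>UNIV. (a j)\<^sup>2)"
      by (simp add: sum.distrib sum_divide_distrib)
    also have "\<dots> \<le> Kr * L2norm_sq \<mu> f / real n + (\<Sum>j\<in>UNIV. (a j)\<^sup>2)"
      using E3 by (simp add: divide_right_mono)
    finally show ?thesis by (simp add: Pf)
  qed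
  define H where "H x = L2norm_sq \<mu> (hatP n w \<phi> x f)" for x
  have Hb: "H x \<le> inverse (1 - \<delta>) * Z1 x \<and> H x \<le> inverse ((1 - \<delta>)\<^sup>2) * Z2 x" if xS: "x \<in> S" for x
  proof -
    have lam: "lambda_min (Gw n w \<phi> x) \<ge> 1 - \<delta>" using xS by (simp add: S_def S_delta_def)
    have pd: "(1 - \<delta>) * (c \<bullet> c) \<le> emp_norm_sq n w x (Vfun \<phi> c)" for c
    proof -
      have "(1 - \<delta>) * (c \<bullet> c) \<le> lambda_min (Gw n w \<phi> x) * (c \<bullet> c)"
        using lam by (intro mult_right_mono) auto
      also have "\<dots> \<le> c \<bullet> (Gw n w \<phi> x *v c)" by (rule lambda_min_quad[OF Gw_sym])
      finally show ?thesis by (simp add: Gw_quad)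
    qed
    have d1: "1 - \<delta> > 0" using delta by simp
    obtain c where hc: "hatP n w \<phi> x f = Vfun \<phi> c" and c1: "(1 - \<delta>) * (c \<bullet> c) \<le> emp_norm_sq n w x f"
      and c2: "(1 - \<delta>)\<^sup>2 * (c \<bullet> c) \<le> (\<chi> j. ipn n w x f (\<phi> j)) \<bullet> (\<chi> j. ipn n w x f (\<phi> j))"
      using lsq[OF pd d1 w_nonneg] by blast
    have Hc: "H x = c \<bullet> c" unfolding H_def hc by (rule L2_Vfun[OF phi_meas phi_L2 phi_orth])
    have "H x \<le> inverse (1 - \<delta>) * Z1 x"
      using c1 d1 by (simp add: Hc Z1emp field_simps)
    moreover have "H x \<le> inverse ((1 - \<delta>)\<^sup>2) * Z2 x"
      using c2 d1 by (simp add: Hc Z2_def bv_def field_simps)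
    ultimately show ?thesis by simp
  qed
  have pos: "measure P S > 0" using PS by (simp add: P_def S_def \<nu>_def)
  have B1: "cond_exp_event P H S \<le> ennreal (inverse (measure P S) * inverse (1 - \<delta>) * L2norm_sq \<mu> f)"
    by (rule cond_bound[OF Pprob pos Z1int Z1nn _ _ EZ1]) (use Hb delta in auto)
  have B2: "cond_exp_event P H S \<le> ennreal (inverse (measure P S) * inverse ((1 - \<delta>)\<^sup>2) *
                (L2norm_sq \<mu> (Pproj \<mu> \<phi> f) + Kr / real n * L2norm_sq \<mu> f))"
    by (rule cond_bound[OF Pprob pos Z2int Z2nn _ _ EZ2]) (use Hb in auto)
  show ?thesis using B1 B2 unfolding Let_def P_def S_def \<nu>_def H_def Kr_def by simp
qed

end
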